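(* Let $N\ge 1$, $K\ge 2$, $M\in[0,N]$, and let $\mathbf p=(p_1,\dots,p_N)$ be a probability vector with $p_1\ge p_2\ge\dots\ge p_N$. For every caching scheme with uncoded placement (for any file size $F$) with cache size $M$, the average delivery rate $\bar R=\sum_{\mathbf d\in[N]^K}\big(\prod_{i=1}^K p_{d_i}\big)R(\mathbf d)$ satisfies $$\bar R\;\ge\;\min_{\mathbf a \text{ feasible}}\ \bar R_{\mathrm{lb}}(\mathbf a),$$ i.e. the optimal value of the optimization problem (P1): minimize $\bar R_{\mathrm{lb}}(\mathbf a)$ over all feasible placement vectors $\mathbf a$, is a lower bound on the average rate of every caching scheme with uncoded placement.
   Context: Notation: $[m]=\{1,\dots,m\}$; $\binom{m}{l}=0$ if $l>m$ or $m<0$. A demand vector $\mathbf d=(d_1,\dots,d_K)\in[N]^K$ (user $k$ requests file $d_k$) occurs with probability $\prod_{i=1}^K p_{d_i}$. For $\mathbf d$, let $\mathcal D(\mathbf d)\subseteq[N]$ be the set of distinct entries of $\mathbf d$. Placement vectors: a placement vector is $\mathbf a=(a_{n,l})_{n\in[N],\,0\le l\le K}$ of reals; it is feasible if (i) $a_{n,l}\ge 0$ for all $n,l$; (ii) $\sum_{l=0}^K\binom{K}{l}a_{n,l}=1$ for every $n\in[N]$; (iii) $\sum_{n=1}^N\sum_{l=1}^K\binom{K-1}{l-1}a_{n,l}\le M$. Lower-bound function: for nonempty $\mathcal D\subseteq[N]$, $R_{\mathrm{lb}}(\mathcal D;\mathbf a)=\max_{\pi}\sum_{l=0}^{K-1}\sum_{i=1}^{|\mathcal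 D|}\binom{K-i}{l}a_{\pi(i),l}$, the maximum over all bijections $\pi:[|\mathcal D|]\to\mathcal D$; and $\bar R_{\mathrm{lb}}(\mathbf a)=\sum_{\mathbf d\in[N]^K}\big(\prod_{i=1}^K p_{d_i}\big)R_{\mathrm{lb}}(\mathcal D(\mathbf d);\mathbf a)$. Caching scheme with uncoded placement: there are $N$ independent files $W_1,\dots,W_N$, each uniformly distributed on $\{0,1\}^F$, and $K$ users. In the placement phase (before demands are known) each user $k$ stores a cache content $Z_k$ consisting of a subset of the bits of the files (no coding), of total size at most $MF$ bits. In the delivery phase, for each demand vector $\mathbf d$ the server broadcasts a message $X_{\mathbf d}$ (a function of $W_1,\dots,W_N$) of $R(\mathbf d)F$ bits to all users, such that for every $k$, $W_{d_k}$ is a function of $(X_{\mathbf d},Z_k)$. *)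

theory Defs
  imports Complex_Main
begin

text \<open>Files are indexed by 1..N, users by 1..K, bits of a file by 0..F-1.
  A realisation of the library is W :: nat => nat => bool (W n j = bit j of file n),
  normalised to False outside the index range.\<close>

definition file_space :: "nat \<Rightarrow> nat \<Rightarrow> (nat \<Rightarrow> nat \<Rightarrow> bool) set" where
  "file_space N F = {W. \<forall>n j. (n \<notin> {1..N} \<or> F \<le> j) \<longrightarrow> W n j = False}"

definition demands :: "nat \<Rightarrow> nat \<Rightarrow> (nat \<Rightarrow> nat) set" where
  "demands N K = {d. (\<forall>k\<in>{1..K}. d k \<in> {1..N}) \<and> (\<forall>k. k \<notin> {1..K} \<longrightarrow> d k = 0)}"

definition demand_prob :: "(nat \<Rightarrow> real) \<Rightarrow> nat \<Rightarrow> (nat \<Rightarrow> nat) \<Rightarrow> real" where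
  "demand_prob p K d = (\<Prod>i\<in>{1..K}. p (d i))"

definition distinct_demands :: "nat \<Rightarrow> (nat \<Rightarrow> nat) \<Rightarrow> nat set" where
  "distinct_demands K d = d ` {1..K}"

definition cache_content :: "(nat \<times> nat) set \<Rightarrow> (nat \<Rightarrow> nat \<Rightarrow> bool) \<Rightarrow> (nat \<times> nat \<Rightarrow> bool)" where
  "cache_content S W = (\<lambda>(n, j). if (n, j) \<in> S then W n j else False)"

text \<open>A caching scheme with uncoded placement: S k is the set of bits (file, position)
  stored by user k, X d is the broadcast encoder for demand d, producing L d bits.\<close>
definition uncoded_scheme ::
  "nat \<Rightarrow> nat \<Rightarrow> real \<Rightarrow> nat \<Rightarrow> (nat \<Rightarrow> (nat \<times> nat) set)
   \<Rightarrow> ((nat \<Rightarrow> nat) \<Rightarrow> (nat \<Rightarrow> nat \<Rightarrow> bool) \<Rightarrow> bool list) \<Rightarrow> ((nat \<Rightarrow> nat) \<Rightarrow> nat) \<Rightarrow> bool" where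
  "uncoded_scheme N K M F S X L \<longleftrightarrow>
     (\<forall>k\<in>{1..K}. S k \<subseteq> {1..N} \<times> {0..<F} \<and> real (card (S k)) \<le> M * real F) \<and>
     (\<forall>d\<in>demands N K.
        (\<forall>W\<in>file_space N F. length (X d W) = L d) \<and>
        (\<forall>k\<in>{1..K}. \<exists>g. \<forall>W\<in>file_space N F.
            g (X d W) (cache_content (S k) W) = map (W (d k)) [0..<F]))"

definition avg_rate ::
  "nat \<Rightarrow> nat \<Rightarrow> (nat \<Rightarrow> real) \<Rightarrow> nat \<Rightarrow> ((nat \<Rightarrow> nat) \<Rightarrow> nat) \<Rightarrow> real" where
  "avg_rate N K p F L = (\<Sum>d\<in>demands N K. demand_prob p K d * (real (L d) / real F))"

definition feasible_placement :: "nat \<Rightarrow> nat \<Rightarrow> real \<Rightarrow> (nat \<Rightarrow> nat \<Rightarrow> real) \<Rightarrow> bool" where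
  "feasible_placement N K M a \<longleftrightarrow>
     (\<forall>n\<in>{1..N}. \<forall>l\<in>{0..K}. a n l \<ge> 0) \<and>
     (\<forall>n\<in>{1..N}. (\<Sum>l=0..K. real (K choose l) * a n l) = 1) \<and>
     (\<Sum>n=1..N. \<Sum>l=1..K. real ((K - 1) choose (l - 1)) * a n l) \<le> M"

definition R_lb :: "nat \<Rightarrow> nat set \<Rightarrow> (nat \<Rightarrow> nat \<Rightarrow> real) \<Rightarrow> real" where
  "R_lb K D a = Max {(\<Sum>l=0..K-1. \<Sum>i=1..card D. real ((K - i) choose l) * a (\<pi> i) l)
                      | \<pi>. bij_betw \<pi> {1..card D} D}"

definition R_lb_bar :: "nat \<Rightarrow> nat \<Rightarrow> (nat \<Rightarrow> real) \<Rightarrow> (nat \<Rightarrow> nat \<Rightarrow> real) \<Rightarrow> real" where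
  "R_lb_bar N K p a = (\<Sum>d\<in>demands N K. demand_prob p K d * R_lb K (distinct_demands K d) a)"

end

theory Submission
  imports Defs "HOL-Combinatorics.Permutations"
begin


lemma exists_perm_image:
  fixes A T T' :: "'a set"
  assumes "finite A" "T \<subseteq> A" "T' \<subseteq> A" "card T' = card T"
  shows "\<exists>\<tau>. \<tau> permutes A \<and> \<tau> ` T = T'"
proof -
  have fT: "finite T" "finite T'" using assms finite_subset by auto
  obtain f where f: "bij_betw f T T'" using finite_same_card_bij[OF fT] assms(4) by metis
  have "card (A - T) = card (A - T')" using assms fT by (simp add: card_Diff_subset)
  then obtain g where g: "bij_betw g (A - T) (A - T')"
    using finite_same_card_bij[of "A - T" "A - T'"] assms by auto
  define \<tau> where "\<tau> x = (if x \<in> T then f x else if x \<in> A then g x else x)" for x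
  have "bij_betw \<tau> T T'" using f by (rule bij_betw_cong[THEN iffD1, rotated]) (simp add: \<tau>_def)
  moreover have "bij_betw \<tau> (A - T) (A - T')" using g
    by (rule bij_betw_cong[THEN iffD1, rotated]) (simp add: \<tau>_def)
  ultimately have "bij_betw \<tau> (T \<union> (A - T)) (T' \<union> (A - T'))"
    by (intro bij_betw_combine) auto
  moreover have "T \<union> (A - T) = A" "T' \<union> (A - T') = A" using assms by auto
  ultimately have "bij_betw \<tau> A A" by simp
  hence "\<tau> permutes A" by (rule bij_imp_permutes) (use assms in \<open>auto simp: \<tau>_def\<close>)
  moreover have "\<tau> ` T = T'" using f by (auto simp: \<tau>_def bij_betw_def)
  ultimately show ?thesis by blast
qed

lemma perm_fiber_le:
  fixes A T T' T'' :: "'a set"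
  assumes "finite A" "T' \<subseteq> A" "T'' \<subseteq> A" "card T'' = card T'"
  shows "card {\<sigma>. \<sigma> permutes A \<and> \<sigma> ` T = T'} \<le> card {\<sigma>. \<sigma> permutes A \<and> \<sigma> ` T = T''}"
proof -
  obtain \<tau> where t: "\<tau> permutes A" "\<tau> ` T' = T''" using exists_perm_image[OF assms(1,2,3)] assms(4) by metis
  show ?thesis
  proof (rule card_inj_on_le[where f="\<lambda>\<sigma>. \<tau> \<circ> \<sigma>"])
    show "inj_on ((\<circ>) \<tau>) {\<sigma>. \<sigma> permutes A \<and> \<sigma> ` T = T'}"
      using permutes_inj[OF t(1)] by (auto simp: inj_on_def fun_eq_iff inj_def)
    show "(\<circ>) \<tau> ` {\<sigma>. \<sigma> permutes A \<and> \<sigma> ` T = T'} \<subseteq> {\<sigma>. \<sigma> permutes A \<and> \<sigma> ` T = T''}"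
      using t by (auto simp: permutes_compose image_comp[symmetric])
    show "finite {\<sigma>. \<sigma> permutes A \<and> \<sigma> ` T = T''}"
      using finite_permutations[OF assms(1)] by (rule finite_subset[rotated]) auto
  qed
qed

lemma perm_count_gen:
  fixes A T :: "'a set" and Q :: "'a set \<Rightarrow> bool"
  assumes "finite A" "T \<subseteq> A"
  shows "card {\<sigma>. \<sigma> permutes A \<and> Q (\<sigma> ` T)}
     = card {T'. T' \<subseteq> A \<and> card T' = card T \<and> Q T'} * card {\<sigma>. \<sigma> permutes A \<and> \<sigma> ` T = T}"
proof -
  define P where "P T' = {\<sigma>. \<sigma> permutes A \<and> \<sigma> ` T = T'}" for T'
  define Ts where "Ts = {T'. T' \<subseteq> A \<and> card T' = card T \<and> Q T'}"
  have fin: "finite (P T')" for T'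
    unfolding P_def using finite_permutations[OF assms(1)] by (rule finite_subset[rotated]) auto
  have eq: "card (P T') = card (P T)" if "T' \<in> Ts" for T'
    using perm_fiber_le[OF assms(1), of T' T T] perm_fiber_le[OF assms(1), of T T' T] that assms
    unfolding P_def Ts_def by auto
  have img: "\<sigma> ` T \<subseteq> A \<and> card (\<sigma> ` T) = card T" if "\<sigma> permutes A" for \<sigma>
    using that assms permutes_image[OF that] permutes_inj[OF that]
    by (auto simp: card_image inj_on_subset)
  have "{\<sigma>. \<sigma> permutes A \<and> Q (\<sigma> ` T)} = (\<Union>T'\<in>Ts. P T')"
    unfolding P_def Ts_def using img by auto
  hence "card {\<sigma>. \<sigma> permutes A \<and> Q (\<sigma> ` T)} = (\<Sum>T'\<in>Ts. card (P T'))"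
    apply (simp, intro card_UN_disjoint)
    apply (auto simp: fin Ts_def intro: finite_subset[OF _ finite_Pow_iff[THEN iffD2, OF assms(1)]])
    apply (auto simp: P_def)
    done
  also have "\<dots> = (\<Sum>T'\<in>Ts. card (P T))" by (rule sum.cong) (auto simp: eq)
  finally show ?thesis by (simp add: Ts_def P_def)
qed

lemma perm_count:
  fixes A T U :: "'a set"
  assumes "finite A" "T \<subseteq> A" "U \<subseteq> A"
  shows "card {\<sigma>. \<sigma> permutes A \<and> \<sigma> ` T \<inter> U = {}} * (card A choose card T)
       = fact (card A) * ((card A - card U) choose card T)"
proof -
  define c where "c = card {\<sigma>. \<sigma> permutes A \<and> \<sigma> ` T = T}"
  have 1: "fact (card A) = (card A choose card T) * c"
    using perm_count_gen[OF assms(1,2), of "\<lambda>_. True"] card_permutations[OF refl assms(1)]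
      n_subsets[OF assms(1)] by (simp add: c_def)
  have "{T'. T' \<subseteq> A \<and> card T' = card T \<and> T' \<inter> U = {}} = {T'. T' \<subseteq> A - U \<and> card T' = card T}"
    by auto
  hence 2: "card {\<sigma>. \<sigma> permutes A \<and> \<sigma> ` T \<inter> U = {}} = ((card A - card U) choose card T) * c"
    using perm_count_gen[OF assms(1,2), of "\<lambda>T'. T' \<inter> U = {}"] n_subsets[of "A - U" "card T"] assms
    by (simp add: c_def card_Diff_subset finite_subset)
  show ?thesis using 1 2 by simp
qed



lemma rate_bound:
  fixes S :: "nat \<Rightarrow> (nat \<times> nat) set"
    and X :: "(nat \<Rightarrow> nat) \<Rightarrow> (nat \<Rightarrow> nat \<Rightarrow> bool) \<Rightarrow> bool list"
    and L :: "(nat \<Rightarrow> nat) \<Rightarrow> nat" and m :: nat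
  assumes sch: "uncoded_scheme N K M F S X L" and d: "d \<in> demands N K"
    and u: "\<forall>i\<in>{1..m}. u i \<in> {1..K}" and inj: "inj_on (\<lambda>i. d (u i)) {1..m}"
  shows "(\<Sum>i=1..m. card {j\<in>{0..<F}. \<forall>i'\<in>{1..i}. (d (u i), j) \<notin> S (u i')}) \<le> L d"
proof -
  define J where "J i = {j\<in>{0..<F}. \<forall>i'\<in>{1..i}. (d (u i), j) \<notin> S (u i')}" for i
  define B where "B = (\<Union>i\<in>{1..m}. (\<lambda>j. (d (u i), j)) ` J i)"
  have finJ: "finite (J i)" for i unfolding J_def by auto
  have disj: "Pair (d (u i)) ` J i \<inter> Pair (d (u i')) ` J i' = {}"
    if "i \<in> {1..m}" "i' \<in> {1..m}" "i \<noteq> i'" for i i'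
  proof -
    have "d (u i) \<noteq> d (u i')" using inj_onD[OF inj _ that(1,2)] that(3) by blast
    thus ?thesis by blast
  qed
  have cardB: "card B = (\<Sum>i=1..m. card (J i))"
  proof -
    have "card B = (\<Sum>i=1..m. card (Pair (d (u i)) ` J i))"
      unfolding B_def by (rule card_UN_disjoint) (use finJ disj in auto)
    also have "\<dots> = (\<Sum>i=1..m. card (J i))"
      by (rule sum.cong[OF refl], rule card_image) (simp add: inj_on_def)
    finally show ?thesis .
  qed
  have dN: "d k \<in> {1..N}" if "k \<in> {1..K}" for k using d that by (auto simp: demands_def)
  have Bsub: "B \<subseteq> {1..N} \<times> {0..<F}" unfolding B_def J_def using u dN by fastforce
  hence finB: "finite B" by (rule finite_subset) auto
  define W where "W E = (\<lambda>n j. (n, j) \<in> E)" for E :: "(nat \<times> nat) set"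
  have Wfs: "W E \<in> file_space N F" if "E \<subseteq> B" for E
    using that Bsub unfolding W_def file_space_def by auto
  from sch d have "\<forall>k\<in>{1..K}. \<exists>g. \<forall>W\<in>file_space N F.
            g (X d W) (cache_content (S k) W) = map (W (d k)) [0..<F]"
    unfolding uncoded_scheme_def by blast
  from bchoice[OF this] obtain G where G0: "\<forall>k\<in>{1..K}. \<forall>W\<in>file_space N F.
      G k (X d W) (cache_content (S k) W) = map (W (d k)) [0..<F]"
    by blast
  have G: "\<And>k W. k \<in> {1..K} \<Longrightarrow> W \<in> file_space N F \<Longrightarrow>
      G k (X d W) (cache_content (S k) W) = map (W (d k)) [0..<F]"
    using G0 by blast
  have len: "length (X d W') = L d" if "W' \<in> file_space N F" for W'
    using sch d that unfolding uncoded_scheme_def by blast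
  have injX: "inj_on (\<lambda>E. X d (W E)) (Pow B)"
  proof (rule inj_onI)
    fix E1 E2 assume E1: "E1 \<in> Pow B" and E2: "E2 \<in> Pow B" and eq: "X d (W E1) = X d (W E2)"
    have key: "i \<in> {1..m} \<Longrightarrow> j < F \<Longrightarrow> ((d (u i), j) \<in> E1) = ((d (u i), j) \<in> E2)" for i j
    proof (induction i arbitrary: j rule: less_induct)
      case (less i)
      have "cache_content (S (u i)) (W E1) = cache_content (S (u i)) (W E2)"
      proof (rule ext, clarify)
        fix n j'
        show "cache_content (S (u i)) (W E1) (n, j') = cache_content (S (u i)) (W E2) (n, j')"
        proof (cases "(n, j') \<in> S (u i) \<and> (n, j') \<in> B")
          case False
          thus ?thesis using E1 E2 by (auto simp: cache_content_def W_def)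
        next
          case True
          then obtain i'' where i'': "i'' \<in> {1..m}" "n = d (u i'')" "j' \<in> J i''" unfolding B_def by auto
          have "i'' < i"
          proof (rule ccontr)
            assume "\<not> i'' < i"
            hence "i \<in> {1..i''}" using less.prems by auto
            thus False using i'' True unfolding J_def by auto
          qed
          hence "((n, j') \<in> E1) = ((n, j') \<in> E2)" using less.IH[of i'' j'] i'' unfolding J_def by auto
          thus ?thesis by (simp add: cache_content_def W_def)
        qed
      qed
      moreover have ui: "u i \<in> {1..K}" using u less.prems(1) by blast
      moreover have "W E1 \<in> file_space N F" "W E2 \<in> file_space N F" using Wfs E1 E2 by blast+
      ultimately have "map (W E1 (d (u i))) [0..<F] = map (W E2 (d (u i))) [0..<F]"
        using G[of "u i" "W E1"] G[of "u i" "W E2"] eq by simp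
      hence "W E1 (d (u i)) j = W E2 (d (u i)) j" using less.prems(2) by (simp add: map_eq_conv)
      thus ?case by (simp add: W_def)
    qed
    show "E1 = E2"
    proof (intro set_eqI iffI)
      fix x assume "x \<in> E1"
      then obtain i j where "i \<in> {1..m}" "j \<in> J i" "x = (d (u i), j)" using E1 unfolding B_def by auto
      thus "x \<in> E2" using key[of i j] \<open>x \<in> E1\<close> unfolding J_def by auto
    next
      fix x assume "x \<in> E2"
      then obtain i j where "i \<in> {1..m}" "j \<in> J i" "x = (d (u i), j)" using E2 unfolding B_def by auto
      thus "x \<in> E1" using key[of i j] \<open>x \<in> E2\<close> unfolding J_def by auto
    qed
  qed
  have "card (Pow B) \<le> card {xs. set xs \<subseteq> (UNIV :: bool set) \<and> length xs = L d}"
    apply (rule card_inj_on_le[OF injX])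
    using Wfs len apply auto[1]
    by (rule finite_lists_length_eq) simp
  moreover have "card {xs. set xs \<subseteq> (UNIV :: bool set) \<and> length xs = L d} = 2 ^ L d"
    by (subst card_lists_length_eq) simp_all
  ultimately have "(2::nat) ^ card B \<le> 2 ^ L d" using finB by (simp add: card_Pow)
  hence "card B \<le> L d" by (rule power_le_imp_le_exp[rotated]) simp
  thus ?thesis using cardB unfolding J_def by simp
qed



lemma delta_sum_one:
  fixes c K :: nat
  assumes "c \<le> K"
  shows "(\<Sum>l=0..K. (of_bool (c = l) :: real)) = 1"
proof -
  have "{0..K} \<inter> {l. c = l} = {c}" using assms by auto
  thus ?thesis by simp
qed

lemma delta_sum_ratio:
  fixes c K :: nat
  assumes "c \<le> K" "K \<ge> 1"
  shows "(\<Sum>l=1..K. real ((K - 1) choose (l - 1)) / real (K choose l) * of_bool (c = l)) = real c / real K"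
proof (cases "c = 0")
  case True thus ?thesis by simp
next
  case False
  hence "{1..K} \<inter> {l. c = l} = {c}" using assms by auto
  have "(\<Sum>l=1..K. real ((K - 1) choose (l - 1)) / real (K choose l) * of_bool (c = l))
      = (\<Sum>l\<in>{1..K} \<inter> {l. c = l}. real ((K - 1) choose (l - 1)) / real (K choose l))"
    by (rule sum.mono_neutral_cong) auto
  also have "\<dots> = real ((K - 1) choose (c - 1)) / real (K choose c)" using \<open>{1..K} \<inter> {l. c = l} = {c}\<close> by simp
  also have "\<dots> = real c / real K"
  proof -
    have "c * (K choose c) = K * ((K - 1) choose (c - 1))" using False times_binomial_minus1_eq by auto
    hence "real c * real (K choose c) = real K * real ((K - 1) choose (c - 1))" by (metis of_nat_mult)
    moreover have "real (K choose c) > 0" "real K > 0" using assms by auto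
    ultimately show ?thesis by (simp add: field_simps)
  qed
  finally show ?thesis .
qed

lemma feasible:
  fixes S :: "nat \<Rightarrow> (nat \<times> nat) set"
  assumes sch: "uncoded_scheme N K M F S X L" and F: "F \<ge> 1" and K: "K \<ge> 1"
  defines "T \<equiv> \<lambda>n j. {k\<in>{1..K}. (n, j) \<in> S k}"
  defines "a \<equiv> \<lambda>n l. (\<Sum>j<F. of_bool (card (T n j) = l)) / (real F * real (K choose l))"
  shows "feasible_placement N K M a"
proof -
  have cT: "card (T n j) \<le> K" for n j
  proof -
    have "T n j \<subseteq> {1..K}" unfolding T_def by auto
    from card_mono[OF _ this] show ?thesis by simp
  qed
  have Fpos: "real F > 0" using F by simp
  have i: "\<forall>n\<in>{1..N}. \<forall>l\<in>{0..K}. a n l \<ge> 0" unfolding a_def by (auto intro!: divide_nonneg_nonneg sum_nonneg)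
  have ii: "(\<Sum>l=0..K. real (K choose l) * a n l) = 1" for n
  proof -
    have "(\<Sum>l=0..K. real (K choose l) * a n l) = (\<Sum>l=0..K. (\<Sum>j<F. of_bool (card (T n j) = l)) / real F)"
      by (rule sum.cong[OF refl]) (auto simp: a_def)
    also have "\<dots> = (\<Sum>l=0..K. (\<Sum>j<F. of_bool (card (T n j) = l))) / real F"
      by (simp only: sum_divide_distrib)
    also have "\<dots> = (\<Sum>j<F. \<Sum>l=0..K. of_bool (card (T n j) = l)) / real F"
      by (rule arg_cong[where f="\<lambda>x. x / real F"], rule sum.swap)
    also have "\<dots> = (\<Sum>j<F. 1) / real F"
      by (rule arg_cong[where f="\<lambda>x. x / real F"], rule sum.cong[OF refl], rule delta_sum_one[OF cT])
    also have "\<dots> = 1" using Fpos by simp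
    finally show ?thesis .
  qed
  have iii: "(\<Sum>n=1..N. \<Sum>l=1..K. real ((K - 1) choose (l - 1)) * a n l) \<le> M"
  proof -
    have eq1: "real ((K-1) choose (l-1)) * a n l = (\<Sum>j<F. real ((K-1) choose (l-1)) / real (K choose l) * of_bool (card (T n j) = l)) / real F" for n l
    proof -
      have "(\<Sum>j<F. real ((K-1) choose (l-1)) / real (K choose l) * of_bool (card (T n j) = l))
          = real ((K-1) choose (l-1)) / real (K choose l) * (\<Sum>j<F. of_bool (card (T n j) = l))"
        by (rule sum_distrib_left[symmetric])
      moreover have alg: "\<And>c1 c2 s f::real. c1 * (s / (f * c2)) = c1 / c2 * s / f"
        by (simp add: field_split_simps)
      ultimately show ?thesis by (simp only: a_def alg)
    qed
    have "(\<Sum>n=1..N. \<Sum>l=1..K. real ((K - 1) choose (l - 1)) * a n l)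
        = (\<Sum>n=1..N. \<Sum>l=1..K. (\<Sum>j<F. real ((K-1) choose (l-1)) / real (K choose l) * of_bool (card (T n j) = l)) / real F)"
      by (simp only: eq1)
    also have "\<dots> = (\<Sum>n=1..N. \<Sum>l=1..K. (\<Sum>j<F. real ((K-1) choose (l-1)) / real (K choose l) * of_bool (card (T n j) = l))) / real F"
      by (simp only: sum_divide_distrib)
    also have "\<dots> = (\<Sum>n=1..N. \<Sum>j<F. \<Sum>l=1..K. real ((K - 1) choose (l - 1)) / real (K choose l) * of_bool (card (T n j) = l)) / real F"
      by (rule arg_cong[where f="\<lambda>x. x / real F"], rule sum.cong[OF refl], rule sum.swap)
    also have "\<dots> = (\<Sum>n=1..N. \<Sum>j<F. real (card (T n j))) / (real K * real F)"
      by (simp only: delta_sum_ratio[OF cT K] sum_divide_distrib[symmetric]) (simp add: field_simps)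
    also have "(\<Sum>n=1..N. \<Sum>j<F. real (card (T n j))) = (\<Sum>k=1..K. real (card (S k)))"
    proof -
      have "(\<Sum>n=1..N. \<Sum>j<F. real (card (T n j))) = (\<Sum>n=1..N. \<Sum>j<F. \<Sum>k=1..K. (of_bool ((n, j) \<in> S k) :: real))"
        by (simp add: T_def Int_def)
      also have "\<dots> = (\<Sum>n=1..N. \<Sum>k=1..K. \<Sum>j<F. (of_bool ((n, j) \<in> S k) :: real))"
        by (rule sum.cong[OF refl], rule sum.swap)
      also have "\<dots> = (\<Sum>k=1..K. \<Sum>n=1..N. \<Sum>j<F. (of_bool ((n, j) \<in> S k) :: real))"
        by (rule sum.swap)
      also have "\<dots> = (\<Sum>k=1..K. real (card (S k)))"
      proof (rule sum.cong[OF refl])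
        fix k assume k: "k \<in> {1..K}"
        have "(\<Sum>n=1..N. \<Sum>j<F. (of_bool ((n, j) \<in> S k) :: real)) = (\<Sum>(n,j)\<in>{1..N} \<times> {..<F}. of_bool ((n,j) \<in> S k))"
          by (rule sum.cartesian_product)
        also have "\<dots> = (\<Sum>x\<in>{1..N} \<times> {..<F}. of_bool (x \<in> S k))"
          by (rule sum.cong) auto
        also have "\<dots> = real (card (({1..N} \<times> {..<F}) \<inter> S k))" by (simp add: Int_def)
        also have "({1..N} \<times> {..<F}) \<inter> S k = S k"
        proof -
          have "S k \<subseteq> {1..N} \<times> {0..<F}" using sch k unfolding uncoded_scheme_def by blast
          thus ?thesis by auto
        qed
        finally show "(\<Sum>n=1..N. \<Sum>j<F. (of_bool ((n, j) \<in> S k) :: real)) = real (card (S k))" .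
      qed
      finally show ?thesis .
    qed
    also have "(\<Sum>k=1..K. real (card (S k))) \<le> (\<Sum>k=1..K. M * real F)"
      using sch unfolding uncoded_scheme_def by (intro sum_mono) auto
    finally show ?thesis using Fpos K by (simp add: field_simps)
  qed
  show ?thesis unfolding feasible_placement_def using i ii iii by auto
qed



definition Tset :: "(nat \<Rightarrow> (nat \<times> nat) set) \<Rightarrow> nat \<Rightarrow> nat \<Rightarrow> nat \<Rightarrow> nat set" where
  "Tset S K n j = {k\<in>{1..K}. (n, j) \<in> S k}"

definition aplace :: "(nat \<Rightarrow> (nat \<times> nat) set) \<Rightarrow> nat \<Rightarrow> nat \<Rightarrow> nat \<Rightarrow> nat \<Rightarrow> real" where
  "aplace S K F n l = (\<Sum>j<F. of_bool (card (Tset S K n j) = l)) / (real F * real (K choose l))"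

lemma Tset_sub: "Tset S K n j \<subseteq> {1..K}" unfolding Tset_def by auto

lemma card_Tset: "card (Tset S K n j) \<le> K"
  using card_mono[OF _ Tset_sub] by simp

lemma delta3:
  fixes c K i :: nat
  assumes "c \<le> K" "1 \<le> i"
  shows "(\<Sum>l=0..K-1. real ((K-i) choose l) / real (K choose l) * of_bool (c = l))
       = real ((K-i) choose c) / real (K choose c)"
proof (cases "c < K \<or> K = 0")
  case True
  hence e: "{0..K-1} \<inter> {l. c = l} = {c}" using assms by auto
  have "(\<Sum>l=0..K-1. real ((K-i) choose l) / real (K choose l) * of_bool (c = l))
      = (\<Sum>l\<in>{0..K-1} \<inter> {l. c = l}. real ((K-i) choose l) / real (K choose l))"
    by (rule sum.mono_neutral_cong) auto
  thus ?thesis using e by simp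
next
  case False
  hence "c = K" "K \<ge> 1" using assms by auto
  hence "(K - i) choose c = 0" using assms by simp
  moreover have "(\<Sum>l=0..K-1. real ((K-i) choose l) / real (K choose l) * of_bool (c = l)) = 0"
    using \<open>c = K\<close> \<open>K \<ge> 1\<close> by (intro sum.neutral) auto
  ultimately show ?thesis by simp
qed

lemma demand_prob_nonneg:
  assumes "\<forall>n\<in>{1..N}. p n \<ge> 0" "d \<in> demands N K"
  shows "demand_prob p K d \<ge> 0"
  using assms unfolding demand_prob_def demands_def by (intro prod_nonneg) auto

lemma reindex_perm:
  assumes s: "\<sigma> permutes {1..K}"
  shows "(\<Sum>d\<in>demands N K. demand_prob p K d * real (L (d \<circ> \<sigma>)))
       = (\<Sum>d\<in>demands N K. demand_prob p K d * real (L d))"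
proof -
  have inv: "inv \<sigma> permutes {1..K}" using permutes_inv[OF s] .
  have mem: "d \<circ> \<tau> \<in> demands N K" if "d \<in> demands N K" "\<tau> permutes {1..K}" for d \<tau>
    using that permutes_in_image[OF that(2)] permutes_not_in[OF that(2)]
    unfolding demands_def by auto
  have P: "demand_prob p K (d \<circ> \<sigma>) = demand_prob p K d" for d
  proof -
    have "demand_prob p K d = prod ((\<lambda>i. p (d i)) \<circ> \<sigma>) {1..K}"
      unfolding demand_prob_def by (rule prod.permute[OF s])
    thus ?thesis unfolding demand_prob_def by (simp add: comp_def)
  qed
  show ?thesis
  proof (rule sum.reindex_bij_witness[where j="\<lambda>d. d \<circ> \<sigma>" and i="\<lambda>d. d \<circ> inv \<sigma>"])
    fix d assume "d \<in> demands N K"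
    show "d \<circ> \<sigma> \<circ> inv \<sigma> = d" by (simp add: o_assoc[symmetric] permutes_inv_o[OF s])
    show "d \<circ> \<sigma> \<in> demands N K" using mem \<open>d \<in> _\<close> s by blast
    show "demand_prob p K (d \<circ> \<sigma>) * real (L (d \<circ> \<sigma>)) = demand_prob p K d * real (L (d \<circ> \<sigma>))"
      by (simp add: P)
  next
    fix d assume "d \<in> demands N K"
    show "d \<circ> inv \<sigma> \<circ> \<sigma> = d" by (simp add: o_assoc[symmetric] permutes_inv_o[OF s])
    show "d \<circ> inv \<sigma> \<in> demands N K" using mem \<open>d \<in> _\<close> inv by blast
  qed
qed

lemma mul_sum_div:
  fixes c :: real
  assumes "c \<noteq> 0"
  shows "c * (\<Sum>l\<in>A. \<Sum>i\<in>B. h l i / c) = (\<Sum>l\<in>A. \<Sum>i\<in>B. h l i)"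
  using assms by (simp add: sum_distrib_left)

lemma per_demand:
  fixes S :: "nat \<Rightarrow> (nat \<times> nat) set"
    and X :: "(nat \<Rightarrow> nat) \<Rightarrow> (nat \<Rightarrow> nat \<Rightarrow> bool) \<Rightarrow> bool list"
    and L :: "(nat \<Rightarrow> nat) \<Rightarrow> nat"
  assumes sch: "uncoded_scheme N K M F S X L" and F: "F \<ge> 1" and d: "d \<in> demands N K"
  shows "fact K * real F * R_lb K (distinct_demands K d) (aplace S K F)
     \<le> (\<Sum>\<sigma>\<in>{\<sigma>. \<sigma> permutes {1..K}}. real (L (d \<circ> \<sigma>)))"
proof -
  define a where "a = aplace S K F"
  define D where "D = d ` {1..K}"
  define m where "m = card D"
  have finD: "finite D" unfolding D_def by simp
  define f where "f \<pi> = (\<Sum>l=0..K-1. \<Sum>i=1..m. real ((K - i) choose l) * a (\<pi> i) l)" for \<pi> :: "nat \<Rightarrow> nat"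
  define Vals where "Vals = {f \<pi> | \<pi>. bij_betw \<pi> {1..m} D}"
  have Rlb: "R_lb K (distinct_demands K d) a = Max Vals"
    unfolding R_lb_def Vals_def f_def m_def D_def distinct_demands_def ..
  have "Vals \<subseteq> f ` ({1..m} \<rightarrow>\<^sub>E D)"
  proof
    fix v assume "v \<in> Vals"
    then obtain \<pi> where \<pi>: "bij_betw \<pi> {1..m} D" "v = f \<pi>" unfolding Vals_def by blast
    have "f (restrict \<pi> {1..m}) = f \<pi>" unfolding f_def
      by (intro sum.cong refl) simp
    moreover have "restrict \<pi> {1..m} \<in> {1..m} \<rightarrow>\<^sub>E D" using \<pi>(1) by (auto simp: bij_betw_def)
    ultimately show "v \<in> f ` ({1..m} \<rightarrow>\<^sub>E D)" using \<pi>(2) by (metis image_eqI)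
  qed
  hence finV: "finite Vals" by (rule finite_subset) (intro finite_imageI finite_PiE finD, simp)
  obtain \<pi>0 where "bij_betw \<pi>0 {1..m} D" using ex_bij_betw_nat_finite_1[OF finD] m_def by blast
  hence neV: "Vals \<noteq> {}" unfolding Vals_def by blast
  from Max_in[OF finV neV] obtain \<pi> where \<pi>: "bij_betw \<pi> {1..m} D" and R\<pi>: "Max Vals = f \<pi>"
    unfolding Vals_def by auto
  define u where "u i = (SOME k. k \<in> {1..K} \<and> d k = \<pi> i)" for i
  have u: "u i \<in> {1..K} \<and> d (u i) = \<pi> i" if "i \<in> {1..m}" for i
  proof -
    have "\<pi> i \<in> D" using \<pi> that by (auto simp: bij_betw_def)
    hence "\<exists>k. k \<in> {1..K} \<and> d k = \<pi> i" unfolding D_def by auto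
    thus ?thesis unfolding u_def by (rule someI_ex)
  qed
  have injdu: "inj_on (\<lambda>i. d (u i)) {1..m}"
    proof -
    have "inj_on \<pi> {1..m}" using \<pi> by (simp add: bij_betw_def)
    moreover have "\<And>i. i \<in> {1..m} \<Longrightarrow> d (u i) = \<pi> i" using u by blast
    ultimately show ?thesis unfolding inj_on_def by metis
  qed
  have inju: "inj_on u {1..m}" 
  proof (rule inj_onI)
    fix x y assume "x \<in> {1..m}" "y \<in> {1..m}" "u x = u y"
    thus "x = y" using inj_onD[OF injdu, of x y] by simp
  qed
  have mK: "m \<le> K" unfolding m_def D_def using card_image_le[of "{1..K}" d] by simp
  define Perms where "Perms = {\<sigma>. \<sigma> permutes {1..K}}"
  have finP: "finite Perms" unfolding Perms_def by (rule finite_permutations) simp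
  define T where "T i j = Tset S K (\<pi> i) j" for i j
  define U where "U i = u ` {1..i}" for i
  have cardU: "card (U i) = i" if "i \<in> {1..m}" for i
  proof -
    have "inj_on u {1..i}" using inj_on_subset[OF inju] that by auto
    thus ?thesis unfolding U_def by (simp add: card_image)
  qed
  have Usub: "U i \<subseteq> {1..K}" if "i \<in> {1..m}" for i
    unfolding U_def using u that by auto
  have Fpos: "real F > 0" using F by simp
  have bound_sigma: "(\<Sum>i=1..m. \<Sum>j<F. (of_bool (\<sigma> ` T i j \<inter> U i = {}) :: real)) \<le> real (L (d \<circ> \<sigma>))"
    if "\<sigma> \<in> Perms" for \<sigma>
  proof -
    have s: "\<sigma> permutes {1..K}" using that unfolding Perms_def by simp
    define v where "v i = inv \<sigma> (u i)" for i
    have dsig: "d \<circ> \<sigma> \<in> demands N K"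
      using d permutes_in_image[OF s] permutes_not_in[OF s] unfolding demands_def by auto
    have vK: "v i \<in> {1..K}" if "i \<in> {1..m}" for i
      unfolding v_def using permutes_in_image[OF permutes_inv[OF s]] u that by blast
    have dv: "(d \<circ> \<sigma>) (v i) = \<pi> i" if "i \<in> {1..m}" for i
      unfolding v_def using permutes_inverses(1)[OF s] u that by simp
    have injv: "inj_on (\<lambda>i. (d \<circ> \<sigma>) (v i)) {1..m}"
    proof -
      have "inj_on \<pi> {1..m}" using \<pi> by (simp add: bij_betw_def)
      thus ?thesis using dv unfolding inj_on_def by metis
    qed
    have rb: "(\<Sum>i=1..m. card {j\<in>{0..<F}. \<forall>i'\<in>{1..i}. ((d \<circ> \<sigma>) (v i), j) \<notin> S (v i')}) \<le> L (d \<circ> \<sigma>)"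
      using rate_bound[OF sch dsig, of m v] vK injv by blast
    have equiv: "(\<forall>i'\<in>{1..i}. ((d \<circ> \<sigma>) (v i), j) \<notin> S (v i')) \<longleftrightarrow> \<sigma> ` T i j \<inter> U i = {}"
      if i: "i \<in> {1..m}" for i j
    proof -
      have "((d \<circ> \<sigma>) (v i), j) \<notin> S (v i') \<longleftrightarrow> u i' \<notin> \<sigma> ` T i j" if i': "i' \<in> {1..i}" for i'
      proof -
        have i'm: "i' \<in> {1..m}" using i i' by auto
        have "((d \<circ> \<sigma>) (v i), j) \<in> S (v i') \<longleftrightarrow> v i' \<in> T i j"
          unfolding T_def Tset_def using dv[OF i] vK[OF i'm] by auto
        also have "\<dots> \<longleftrightarrow> u i' \<in> \<sigma> ` T i j"
        proof
          assume "v i' \<in> T i j"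
          moreover have "\<sigma> (v i') = u i'" unfolding v_def using permutes_inverses(1)[OF s] .
          ultimately show "u i' \<in> \<sigma> ` T i j" by (metis image_eqI)
        next
          assume "u i' \<in> \<sigma> ` T i j"
          then obtain t where "t \<in> T i j" "u i' = \<sigma> t" by blast
          moreover have "inv \<sigma> (\<sigma> t) = t" using permutes_inverses(2)[OF s] .
          ultimately show "v i' \<in> T i j" unfolding v_def by simp
        qed
        finally show ?thesis by blast
      qed
      hence "(\<forall>i'\<in>{1..i}. ((d \<circ> \<sigma>) (v i), j) \<notin> S (v i')) \<longleftrightarrow> (\<forall>i'\<in>{1..i}. u i' \<notin> \<sigma> ` T i j)"
        by (rule ball_cong[OF refl])
      also have "\<dots> \<longleftrightarrow> \<sigma> ` T i j \<inter> U i = {}"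
      proof
        assume H: "\<forall>i'\<in>{1..i}. u i' \<notin> \<sigma> ` T i j"
        show "\<sigma> ` T i j \<inter> U i = {}"
        proof (rule ccontr)
          assume "\<sigma> ` T i j \<inter> U i \<noteq> {}"
          then obtain x where x: "x \<in> \<sigma> ` T i j" "x \<in> U i" by blast
          then obtain i' where "i' \<in> {1..i}" "x = u i'" unfolding U_def by blast
          thus False using H x(1) by blast
        qed
      next
        assume "\<sigma> ` T i j \<inter> U i = {}"
        thus "\<forall>i'\<in>{1..i}. u i' \<notin> \<sigma> ` T i j" unfolding U_def by blast
      qed
      finally show ?thesis .
    qed
    have "(\<Sum>i=1..m. \<Sum>j<F. (of_bool (\<sigma> ` T i j \<inter> U i = {}) :: real))
        = (\<Sum>i=1..m. real (card {j\<in>{0..<F}. \<forall>i'\<in>{1..i}. ((d \<circ> \<sigma>) (v i), j) \<notin> S (v i')}))"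
    proof (rule sum.cong[OF refl])
      fix i assume i: "i \<in> {1..m}"
      have "{j\<in>{0..<F}. \<forall>i'\<in>{1..i}. ((d \<circ> \<sigma>) (v i), j) \<notin> S (v i')} = {..<F} \<inter> {j. \<sigma> ` T i j \<inter> U i = {}}"
        using equiv[OF i] by auto
      thus "(\<Sum>j<F. (of_bool (\<sigma> ` T i j \<inter> U i = {}) :: real))
          = real (card {j\<in>{0..<F}. \<forall>i'\<in>{1..i}. ((d \<circ> \<sigma>) (v i), j) \<notin> S (v i')})"
        by simp
    qed
    also have "\<dots> \<le> real (L (d \<circ> \<sigma>))" using rb by (simp only: of_nat_sum[symmetric] of_nat_le_iff)
    finally show ?thesis .
  qed
  have count: "(\<Sum>\<sigma>\<in>Perms. (of_bool (\<sigma> ` T i j \<inter> U i = {}) :: real))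
      = fact K * (real ((K - i) choose card (T i j)) / real (K choose card (T i j)))"
    if i: "i \<in> {1..m}" for i j
  proof -
    have "(\<Sum>\<sigma>\<in>Perms. (of_bool (\<sigma> ` T i j \<inter> U i = {}) :: real))
        = real (card (Perms \<inter> {\<sigma>. \<sigma> ` T i j \<inter> U i = {}}))" using finP by simp
    also have "Perms \<inter> {\<sigma>. \<sigma> ` T i j \<inter> U i = {}} = {\<sigma>. \<sigma> permutes {1..K} \<and> \<sigma> ` T i j \<inter> U i = {}}"
      unfolding Perms_def by auto
    finally have e: "(\<Sum>\<sigma>\<in>Perms. (of_bool (\<sigma> ` T i j \<inter> U i = {}) :: real))
        = real (card {\<sigma>. \<sigma> permutes {1..K} \<and> \<sigma> ` T i j \<inter> U i = {}})" .
    have pc: "card {\<sigma>. \<sigma> permutes {1..K} \<and> \<sigma> ` T i j \<inter> U i = {}} * (K choose card (T i j))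
       = fact K * ((K - i) choose card (T i j))"
      using perm_count[OF _ Tset_sub[of S K "\<pi> i" j] Usub[OF i]] cardU[OF i] unfolding T_def
      by simp
    have pos: "(K choose card (T i j)) > 0" unfolding T_def using card_Tset by simp
    have "real (card {\<sigma>. \<sigma> permutes {1..K} \<and> \<sigma> ` T i j \<inter> U i = {}}) * real (K choose card (T i j))
       = fact K * real ((K - i) choose card (T i j))"
      using arg_cong[OF pc, of real] by (simp only: of_nat_mult of_nat_fact)
    hence "real (card {\<sigma>. \<sigma> permutes {1..K} \<and> \<sigma> ` T i j \<inter> U i = {}})
       = fact K * (real ((K - i) choose card (T i j)) / real (K choose card (T i j)))"
      using pos by (simp add: field_simps)
    thus ?thesis using e by simp
  qed
  have eq1: "real ((K - i) choose l) * a n l = (\<Sum>j<F. real ((K - i) choose l) / real (K choose l) * of_bool (card (Tset S K n j) = l)) / real F" for n l i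
  proof -
    have "(\<Sum>j<F. real ((K - i) choose l) / real (K choose l) * of_bool (card (Tset S K n j) = l))
        = real ((K - i) choose l) / real (K choose l) * (\<Sum>j<F. of_bool (card (Tset S K n j) = l))"
      by (rule sum_distrib_left[symmetric])
    moreover have alg: "\<And>c1 c2 s f::real. c1 * (s / (f * c2)) = c1 / c2 * s / f"
      by (simp add: field_split_simps)
    ultimately show ?thesis by (simp only: a_def aplace_def alg)
  qed
  have "real F * f \<pi> = real F * (\<Sum>l=0..K-1. \<Sum>i=1..m. (\<Sum>j<F. real ((K - i) choose l) / real (K choose l) * of_bool (card (T i j) = l)) / real F)"
    unfolding f_def T_def by (simp only: eq1)
  also have "\<dots> = (\<Sum>l=0..K-1. \<Sum>i=1..m. \<Sum>j<F. real ((K - i) choose l) / real (K choose l) * of_bool (card (T i j) = l))"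
    by (rule mul_sum_div) (use Fpos in simp)
  also have "\<dots> = (\<Sum>i=1..m. \<Sum>l=0..K-1. \<Sum>j<F. real ((K - i) choose l) / real (K choose l) * of_bool (card (T i j) = l))"
    by (rule sum.swap)
  also have "\<dots> = (\<Sum>i=1..m. \<Sum>j<F. \<Sum>l=0..K-1. real ((K - i) choose l) / real (K choose l) * of_bool (card (T i j) = l))"
    by (rule sum.cong[OF refl], rule sum.swap)
  also have "\<dots> = (\<Sum>i=1..m. \<Sum>j<F. real ((K - i) choose card (T i j)) / real (K choose card (T i j)))"
    by (intro sum.cong refl delta3) (auto simp: T_def card_Tset)
  finally have Ff: "real F * f \<pi> = (\<Sum>i=1..m. \<Sum>j<F. real ((K - i) choose card (T i j)) / real (K choose card (T i j)))" .
  have "fact K * real F * R_lb K (distinct_demands K d) (aplace S K F) = fact K * (real F * f \<pi>)"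
    unfolding a_def[symmetric] Rlb R\<pi> by (simp only: mult.assoc)
  also have "\<dots> = (\<Sum>i=1..m. \<Sum>j<F. fact K * (real ((K - i) choose card (T i j)) / real (K choose card (T i j))))"
    unfolding Ff by (simp only: sum_distrib_left)
  also have "\<dots> = (\<Sum>i=1..m. \<Sum>j<F. \<Sum>\<sigma>\<in>Perms. (of_bool (\<sigma> ` T i j \<inter> U i = {}) :: real))"
    by (intro sum.cong refl count[symmetric]) auto
  also have "\<dots> = (\<Sum>\<sigma>\<in>Perms. \<Sum>i=1..m. \<Sum>j<F. (of_bool (\<sigma> ` T i j \<inter> U i = {}) :: real))"
    by (simp only: sum.swap[of _ Perms])
  also have "\<dots> \<le> (\<Sum>\<sigma>\<in>Perms. real (L (d \<circ> \<sigma>)))"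
    by (rule sum_mono) (rule bound_sigma)
  finally show ?thesis unfolding Perms_def .
qed


theorem lemma1:
  fixes N K F :: nat and M :: real and p :: "nat \<Rightarrow> real"
    and S :: "nat \<Rightarrow> (nat \<times> nat) set"
    and X :: "(nat \<Rightarrow> nat) \<Rightarrow> (nat \<Rightarrow> nat \<Rightarrow> bool) \<Rightarrow> bool list"
    and L :: "(nat \<Rightarrow> nat) \<Rightarrow> nat"
  assumes "N \<ge> 1" and "K \<ge> 2" and "0 \<le> M" and "M \<le> real N"
    and "\<forall>n\<in>{1..N}. p n \<ge> 0" and "(\<Sum>n=1..N. p n) = 1"
    and "\<forall>i\<in>{1..N}. \<forall>j\<in>{1..N}. i \<le> j \<longrightarrow> p j \<le> p i"
    and "F \<ge> 1"
    and "uncoded_scheme N K M F S X L"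
  shows "\<exists>a. feasible_placement N K M a \<and> R_lb_bar N K p a \<le> avg_rate N K p F L"
proof -
  note sch = assms(9)
  have K1: "K \<ge> 1" using assms(2) by simp
  have Fpos: "real F > 0" using assms(8) by simp
  define a where "a = aplace S K F"
  have feas: "feasible_placement N K M a"
    using feasible[OF sch assms(8) K1] unfolding a_def aplace_def[abs_def] Tset_def[abs_def] .
  define Perms where "Perms = {\<sigma>. \<sigma> permutes {1..K}}"
  have finP: "finite Perms" unfolding Perms_def by (rule finite_permutations) simp
  have cardP: "card Perms = fact K" unfolding Perms_def by (rule card_permutations) simp_all
  define P where "P d = demand_prob p K d" for d
  have Pnn: "P d \<ge> 0" if "d \<in> demands N K" for d
    unfolding P_def using demand_prob_nonneg[OF assms(5) that] .
  have "fact K * real F * R_lb_bar N K p a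
      = (\<Sum>d\<in>demands N K. P d * (fact K * real F * R_lb K (distinct_demands K d) a))"
    unfolding R_lb_bar_def P_def by (simp add: sum_distrib_left mult_ac)
  also have "\<dots> \<le> (\<Sum>d\<in>demands N K. P d * (\<Sum>\<sigma>\<in>Perms. real (L (d \<circ> \<sigma>))))"
    by (rule sum_mono, rule mult_left_mono) (use per_demand[OF sch assms(8)] Pnn in \<open>auto simp: a_def Perms_def\<close>)
  also have "\<dots> = (\<Sum>\<sigma>\<in>Perms. \<Sum>d\<in>demands N K. P d * real (L (d \<circ> \<sigma>)))"
    by (simp only: sum_distrib_left sum.swap[of _ Perms])
  also have "\<dots> = (\<Sum>\<sigma>\<in>Perms. \<Sum>d\<in>demands N K. P d * real (L d))"
    by (rule sum.cong[OF refl]) (unfold P_def Perms_def, rule reindex_perm, simp)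
  also have "\<dots> = fact K * (\<Sum>d\<in>demands N K. P d * real (L d))"
    using cardP by simp
  also have "\<dots> = fact K * real F * avg_rate N K p F L"
    unfolding avg_rate_def P_def using Fpos by (simp add: sum_distrib_left sum_divide_distrib)
  finally have "fact K * real F * R_lb_bar N K p a \<le> fact K * real F * avg_rate N K p F L" .
  moreover have "fact K * real F > 0" using Fpos by simp
  ultimately have "R_lb_bar N K p a \<le> avg_rate N K p F L"
    by (metis mult_le_cancel_left_pos)
  thus ?thesis using feas by blast
qed


end
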